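(* Let $\alpha,\beta$ be relatively prime positive integers. For an integer $t\ge2$, let $n_t=\beta g_tg_{t+1}$, $a_t=(\beta-1)g_{t+1}+\alpha g_t$, and $b_t=g_t$. Then $a(n_t)=a_t$, $b(n_t)=b_t$, and $t(n_t)=t$.
   Context: For positive integers $a_1,a_2$, the $(\alpha,\beta)$-walk $w_k(a_1,a_2)$ is given by $w_1=a_1$, $w_2=a_2$, $w_{k+2}=\alpha w_{k+1}+\beta w_k$ ($k\ge1$). For a positive integer $n$, $s(n;a_1,a_2)$ is the (largest) index $s$ with $w_s(a_1,a_2)=n$ ($-\infty$ if none), and $s(n)=\max_{a_1,a_2\ge1}s(n;a_1,a_2)$. The sequence $g_k$: $g_1=1$, $g_2=\alpha$, $g_{k+2}=\alpha g_{k+1}+\beta g_k$. For $n$ with $s(n)>2$, $a(n),b(n),t(n)$ denote the unique integers $a,b,t$ (which the paper proves exist) with $n=ag_t+\beta bg_{t-1}$, $t\ge2$, $a\le(\beta-1)g_{t+1}+\alpha b$, $b\le g_t$, and such that $a-\alpha b-\ell g_{t+1}$ is not a positive multiple of $\beta$ for any integer $\ell\ge0$. (The conclusion includes that $s(n_t)>2$, so these quantities are defined for $n_t$.) *)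

theory Defs
  imports Complex_Main "HOL-Library.Extended_Real"
begin

text \<open>The (alpha,beta)-walk; index 0 is unused (the paper indexes from 1).\<close>
fun walk :: "int \<Rightarrow> int \<Rightarrow> int \<Rightarrow> int \<Rightarrow> nat \<Rightarrow> int" where
  "walk \<alpha> \<beta> a1 a2 0 = 0"
| "walk \<alpha> \<beta> a1 a2 (Suc 0) = a1"
| "walk \<alpha> \<beta> a1 a2 (Suc (Suc 0)) = a2"
| "walk \<alpha> \<beta> a1 a2 (Suc (Suc (Suc k))) =
     \<alpha> * walk \<alpha> \<beta> a1 a2 (Suc (Suc k)) + \<beta> * walk \<alpha> \<beta> a1 a2 (Suc k)"

text \<open>g_1 = 1, g_2 = alpha, g_{k+2} = alpha g_{k+1} + beta g_k; we set g_0 = 0,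
  which is consistent with the recurrence.\<close>
fun gseq :: "int \<Rightarrow> int \<Rightarrow> nat \<Rightarrow> int" where
  "gseq \<alpha> \<beta> 0 = 0"
| "gseq \<alpha> \<beta> (Suc 0) = 1"
| "gseq \<alpha> \<beta> (Suc (Suc k)) = \<alpha> * gseq \<alpha> \<beta> (Suc k) + \<beta> * gseq \<alpha> \<beta> k"

text \<open>s(n;a1,a2): largest index s \<ge> 1 with w_s = n, or -\<infinity> if there is none.\<close>
definition s_walk :: "int \<Rightarrow> int \<Rightarrow> int \<Rightarrow> int \<Rightarrow> int \<Rightarrow> ereal" where
  "s_walk \<alpha> \<beta> n a1 a2 =
     Sup ((\<lambda>k. ereal (real k)) ` {k. k \<ge> 1 \<and> walk \<alpha> \<beta> a1 a2 k = n})"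

definition s_max :: "int \<Rightarrow> int \<Rightarrow> int \<Rightarrow> ereal" where
  "s_max \<alpha> \<beta> n = Sup {s_walk \<alpha> \<beta> n a1 a2 | a1 a2. a1 \<ge> 1 \<and> a2 \<ge> 1}"

definition abt_cond :: "int \<Rightarrow> int \<Rightarrow> int \<Rightarrow> int \<Rightarrow> int \<Rightarrow> nat \<Rightarrow> bool" where
  "abt_cond \<alpha> \<beta> n a b t \<longleftrightarrow>
     a \<ge> 1 \<and> b \<ge> 1 \<and> t \<ge> 2 \<and>
     n = a * gseq \<alpha> \<beta> t + \<beta> * b * gseq \<alpha> \<beta> (t - 1) \<and>
     a \<le> (\<beta> - 1) * gseq \<alpha> \<beta> (t + 1) + \<alpha> * b \<and>
     b \<le> gseq \<alpha> \<beta> t \<and>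
     \<not> (\<exists>l::nat. \<exists>m::int. m > 0 \<and> a - \<alpha> * b - int l * gseq \<alpha> \<beta> (t + 1) = \<beta> * m)"

definition abt :: "int \<Rightarrow> int \<Rightarrow> int \<Rightarrow> int \<times> int \<times> nat" where
  "abt \<alpha> \<beta> n = (THE (a, b, t). abt_cond \<alpha> \<beta> n a b t)"

definition a_of :: "int \<Rightarrow> int \<Rightarrow> int \<Rightarrow> int" where
  "a_of \<alpha> \<beta> n = fst (abt \<alpha> \<beta> n)"
definition b_of :: "int \<Rightarrow> int \<Rightarrow> int \<Rightarrow> int" where
  "b_of \<alpha> \<beta> n = fst (snd (abt \<alpha> \<beta> n))"
definition t_of :: "int \<Rightarrow> int \<Rightarrow> int \<Rightarrow> nat" where
  "t_of \<alpha> \<beta> n = snd (snd (abt \<alpha> \<beta> n))"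

end

theory Submission
  imports Defs
begin

lemma g_pos:
  assumes "(\<alpha>::int) > 0" "(\<beta>::int) > 0"
  shows "gseq \<alpha> \<beta> (Suc k) \<ge> 1 \<and> gseq \<alpha> \<beta> k \<ge> 0"
proof (induction k rule: nat_less_induct)
  case (1 k)
  show ?case
  proof (cases k)
    case 0 then show ?thesis by simp
  next
    case (Suc j)
    then have h: "gseq \<alpha> \<beta> (Suc j) \<ge> 1" "gseq \<alpha> \<beta> j \<ge> 0" using 1 by auto
    have "\<alpha> * gseq \<alpha> \<beta> (Suc j) \<ge> 1" using h assms
      by (metis mult_le_cancel_left1 order.trans mult_right_mono zero_less_one_class.zero_le_one less_le_not_le mult_1 zero_less_mult_iff int_one_le_iff_zero_less)
    moreover have "\<beta> * gseq \<alpha> \<beta> j \<ge> 0" using h assms by simp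
    ultimately show ?thesis using Suc h by simp
  qed
qed

lemma g_ge1:
  assumes "(\<alpha>::int) > 0" "(\<beta>::int) > 0" "k \<ge> 1"
  shows "gseq \<alpha> \<beta> k \<ge> 1"
  using g_pos[OF assms(1,2), of "k - 1"] assms(3) by simp

lemma g_step:
  assumes "(\<alpha>::int) > 0" "(\<beta>::int) > 0" "k \<ge> 1"
  shows "gseq \<alpha> \<beta> k \<le> gseq \<alpha> \<beta> (Suc k)"
proof (cases k)
  case 0 then show ?thesis using assms by simp
next
  case (Suc j)
  have "gseq \<alpha> \<beta> (Suc j) \<ge> 1" "gseq \<alpha> \<beta> j \<ge> 0" using g_pos[OF assms(1,2)] by auto
  then have "\<alpha> * gseq \<alpha> \<beta> (Suc j) \<ge> gseq \<alpha> \<beta> (Suc j)" "\<beta> * gseq \<alpha> \<beta> j \<ge> 0"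
    using assms by (auto simp: mult_le_cancel_right1)
  then show ?thesis using Suc by simp
qed

lemma g_mono:
  assumes "(\<alpha>::int) > 0" "(\<beta>::int) > 0" "k \<ge> 1" "k \<le> m"
  shows "gseq \<alpha> \<beta> k \<le> gseq \<alpha> \<beta> m"
  using assms(4)
proof (induction m rule: dec_induct)
  case base then show ?case by simp
next
  case (step m)
  then show ?case using g_step[OF assms(1,2), of m] assms(3) by simp
qed

lemma g_cop_beta:
  assumes "coprime (\<alpha>::int) \<beta>"
  shows "coprime (gseq \<alpha> \<beta> (Suc k)) \<beta>"
proof (induction k)
  case 0 then show ?case by simp
next
  case (Suc k)
  have "gcd \<beta> (gseq \<alpha> \<beta> k * \<beta> + \<alpha> * gseq \<alpha> \<beta> (Suc k)) = gcd \<beta> (\<alpha> * gseq \<alpha> \<beta> (Suc k))"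
    by (rule gcd_add_mult)
  moreover have "coprime \<beta> (\<alpha> * gseq \<alpha> \<beta> (Suc k))"
    using Suc assms by (simp add: coprime_commute)
  ultimately show ?case
    by (simp add: coprime_iff_gcd_eq_1 gcd.commute algebra_simps)
qed

lemma g_cop_cons:
  assumes "coprime (\<alpha>::int) \<beta>"
  shows "coprime (gseq \<alpha> \<beta> (Suc k)) (gseq \<alpha> \<beta> k)"
proof (induction k)
  case 0 then show ?case by simp
next
  case (Suc k)
  have "gcd (gseq \<alpha> \<beta> (Suc k)) (\<alpha> * gseq \<alpha> \<beta> (Suc k) + \<beta> * gseq \<alpha> \<beta> k) = gcd (gseq \<alpha> \<beta> (Suc k)) (\<beta> * gseq \<alpha> \<beta> k)"
    by (rule gcd_add_mult)
  moreover have "coprime (gseq \<alpha> \<beta> (Suc k)) (\<beta> * gseq \<alpha> \<beta> k)"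
    using Suc g_cop_beta[OF assms, of k] by simp
  ultimately show ?case
    by (simp add: coprime_iff_gcd_eq_1 gcd.commute)
qed

lemma walk_formula:
  "walk \<alpha> \<beta> a1 a2 (Suc (Suc k)) = a2 * gseq \<alpha> \<beta> (Suc k) + \<beta> * a1 * gseq \<alpha> \<beta> k"
proof (induction k rule: nat_less_induct)
  case (1 k)
  show ?case
  proof (cases k)
    case 0 then show ?thesis by simp
  next
    case (Suc j)
    show ?thesis
    proof (cases j)
      case 0 then show ?thesis using Suc by simp
    next
      case (Suc i)
      have "walk \<alpha> \<beta> a1 a2 (Suc (Suc k)) = \<alpha> * walk \<alpha> \<beta> a1 a2 (Suc (Suc j)) + \<beta> * walk \<alpha> \<beta> a1 a2 (Suc (Suc i))"
        using \<open>k = Suc j\<close> Suc by simp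
      also have "\<dots> = a2 * gseq \<alpha> \<beta> (Suc k) + \<beta> * a1 * gseq \<alpha> \<beta> k"
        using 1[rule_format, of j] 1[rule_format, of i] \<open>k = Suc j\<close> Suc by (simp add: algebra_simps)
      finally show ?thesis .
    qed
  qed
qed

lemma no_rep_above:
  assumes "(\<alpha>::int) > 0" "(\<beta>::int) > 0" "coprime \<alpha> \<beta>" "t \<ge> 1"
  shows "\<forall>A B. A \<ge> 1 \<longrightarrow> B \<ge> 1 \<longrightarrow>
     \<beta> * gseq \<alpha> \<beta> t * gseq \<alpha> \<beta> (t + 1) \<noteq> A * gseq \<alpha> \<beta> (t + 1 + j) + \<beta> * B * gseq \<alpha> \<beta> (t + j)"
proof (induction j)
  case 0
  show ?case
  proof (intro allI impI notI)
    fix A B :: int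
    assume A: "A \<ge> 1" and B: "B \<ge> 1"
      and eq: "\<beta> * gseq \<alpha> \<beta> t * gseq \<alpha> \<beta> (t + 1) = A * gseq \<alpha> \<beta> (t + 1 + 0) + \<beta> * B * gseq \<alpha> \<beta> (t + 0)"
    let ?G = "gseq \<alpha> \<beta> (Suc t)"
    have "?G dvd \<beta> * B * gseq \<alpha> \<beta> t"
    proof -
      have "\<beta> * B * gseq \<alpha> \<beta> t = ?G * (\<beta> * gseq \<alpha> \<beta> t - A)" using eq by (simp add: algebra_simps)
      then show ?thesis by simp
    qed
    moreover have "coprime ?G \<beta>" using g_cop_beta[OF assms(3)] by simp
    moreover have "coprime ?G (gseq \<alpha> \<beta> t)" using g_cop_cons[OF assms(3)] by simp
    ultimately have "?G dvd B"
      by (metis coprime_dvd_mult_left_iff coprime_dvd_mult_right_iff)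
    then obtain k where k: "B = ?G * k" by blast
    have G1: "?G \<ge> 1" using g_ge1[OF assms(1,2)] by simp
    have gt1: "gseq \<alpha> \<beta> t \<ge> 1" using g_ge1[OF assms(1,2,4)] .
    have "k \<ge> 1" using k B G1
      by (metis int_one_le_iff_zero_less pos_add_strict zero_less_mult_iff add.commute less_le_not_le order.strict_trans1 zero_less_one)
    then have "B \<ge> ?G" using k G1 by (simp add: mult_le_cancel_left1)
    then have "\<beta> * B * gseq \<alpha> \<beta> t \<ge> \<beta> * ?G * gseq \<alpha> \<beta> t"
      using assms(2) gt1 by (simp add: mult_right_mono)
    moreover have "A * ?G \<ge> 1" using A G1 by (metis mult_le_cancel_left1 order.trans less_le_not_le zero_less_one mult.commute)
    ultimately show False using eq by (simp add: algebra_simps)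
  qed
next
  case (Suc j)
  show ?case
  proof (intro allI impI notI)
    fix A B :: int
    assume A: "A \<ge> 1" and B: "B \<ge> 1"
      and eq: "\<beta> * gseq \<alpha> \<beta> t * gseq \<alpha> \<beta> (t + 1) = A * gseq \<alpha> \<beta> (t + 1 + Suc j) + \<beta> * B * gseq \<alpha> \<beta> (t + Suc j)"
    have r: "gseq \<alpha> \<beta> (t + 1 + Suc j) = \<alpha> * gseq \<alpha> \<beta> (t + 1 + j) + \<beta> * gseq \<alpha> \<beta> (t + j)"
      by (simp add: add.commute)
    have eq2: "\<beta> * gseq \<alpha> \<beta> t * gseq \<alpha> \<beta> (t + 1) = (\<alpha> * A + \<beta> * B) * gseq \<alpha> \<beta> (t + 1 + j) + \<beta> * A * gseq \<alpha> \<beta> (t + j)"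
      using eq r by (simp add: algebra_simps)
    have "\<alpha> * A + \<beta> * B \<ge> 1" using A B assms(1,2)
      by (smt (verit) mult_pos_pos)
    then show False using Suc A eq2 by blast
  qed
qed

lemma upper_bound:
  assumes "(\<alpha>::int) > 0" "(\<beta>::int) > 0" "abt_cond \<alpha> \<beta> n a b s"
  shows "n \<le> \<beta> * gseq \<alpha> \<beta> s * gseq \<alpha> \<beta> (s + 1)"
proof -
  have c: "a \<ge> 1" "b \<ge> 1" "s \<ge> 2" "n = a * gseq \<alpha> \<beta> s + \<beta> * b * gseq \<alpha> \<beta> (s - 1)"
    "a \<le> (\<beta> - 1) * gseq \<alpha> \<beta> (s + 1) + \<alpha> * b" "b \<le> gseq \<alpha> \<beta> s"
    using assms(3) unfolding abt_cond_def by auto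
  obtain r where r: "s = Suc (Suc r)" using c(3) by (metis add_2_eq_Suc le_Suc_ex)
  have rec: "gseq \<alpha> \<beta> (s + 1) = \<alpha> * gseq \<alpha> \<beta> s + \<beta> * gseq \<alpha> \<beta> (s - 1)"
    using r by simp
  have gs: "gseq \<alpha> \<beta> s \<ge> 0" "gseq \<alpha> \<beta> (s + 1) \<ge> 0" using g_pos[OF assms(1,2)] by auto
  have "n \<le> ((\<beta> - 1) * gseq \<alpha> \<beta> (s + 1) + \<alpha> * b) * gseq \<alpha> \<beta> s + \<beta> * b * gseq \<alpha> \<beta> (s - 1)"
    using c(4,5) gs by (simp add: mult_right_mono)
  also have "\<dots> = (\<beta> - 1) * gseq \<alpha> \<beta> (s + 1) * gseq \<alpha> \<beta> s + b * gseq \<alpha> \<beta> (s + 1)"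
    using rec by (simp add: algebra_simps)
  also have "\<dots> \<le> (\<beta> - 1) * gseq \<alpha> \<beta> (s + 1) * gseq \<alpha> \<beta> s + gseq \<alpha> \<beta> s * gseq \<alpha> \<beta> (s + 1)"
    using c(6) gs by (simp add: mult_right_mono)
  also have "\<dots> = \<beta> * gseq \<alpha> \<beta> s * gseq \<alpha> \<beta> (s + 1)" by (simp add: algebra_simps)
  finally show ?thesis .
qed

theorem lemma3p2:
  fixes \<alpha> \<beta> :: int and t :: nat
  assumes "\<alpha> > 0" and "\<beta> > 0" and "coprime \<alpha> \<beta>" and "t \<ge> 2"
  defines "n_t \<equiv> \<beta> * gseq \<alpha> \<beta> t * gseq \<alpha> \<beta> (t + 1)"
    and "a_t \<equiv> (\<beta> - 1) * gseq \<alpha> \<beta> (t + 1) + \<alpha> * gseq \<alpha> \<beta> t"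
    and "b_t \<equiv> gseq \<alpha> \<beta> t"
  shows "s_max \<alpha> \<beta> n_t > 2 \<and> a_of \<alpha> \<beta> n_t = a_t \<and> b_of \<alpha> \<beta> n_t = b_t \<and> t_of \<alpha> \<beta> n_t = t"
proof -
  obtain r where r: "t = Suc (Suc r)" using assms(4) by (metis add_2_eq_Suc le_Suc_ex)
  have rec: "gseq \<alpha> \<beta> (t + 1) = \<alpha> * gseq \<alpha> \<beta> t + \<beta> * gseq \<alpha> \<beta> (t - 1)"
    using r by simp
  have gt1: "gseq \<alpha> \<beta> t \<ge> 1" using g_ge1[OF assms(1,2)] assms(4) by simp
  have gt1': "gseq \<alpha> \<beta> (t + 1) \<ge> 1" using g_ge1[OF assms(1,2)] by simp
  have gtm: "gseq \<alpha> \<beta> (t - 1) \<ge> 1" using g_ge1[OF assms(1,2)] r by simp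
  have copb: "coprime (gseq \<alpha> \<beta> (t + 1)) \<beta>" using g_cop_beta[OF assms(3), of t] by simp
  have copb': "coprime (gseq \<alpha> \<beta> t) \<beta>" using g_cop_beta[OF assms(3), of "Suc r"] r by simp
  have copc: "coprime (gseq \<alpha> \<beta> t) (gseq \<alpha> \<beta> (t - 1))" using g_cop_cons[OF assms(3), of "Suc r"] r by simp
  have at1: "a_t \<ge> 1"
  proof -
    have "(\<beta> - 1) * gseq \<alpha> \<beta> (t + 1) \<ge> 0" using assms(2) gt1' by simp
    moreover have "\<alpha> * gseq \<alpha> \<beta> t \<ge> 1" using assms(1) gt1 mult_mono[of 1 \<alpha> 1 "gseq \<alpha> \<beta> t"] by simp
    ultimately show ?thesis unfolding a_t_def by simp
  qed
  have ex: "abt_cond \<alpha> \<beta> n_t a_t b_t t"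
    unfolding abt_cond_def
  proof (intro conjI)
    show "a_t \<ge> 1" by (rule at1)
    show "b_t \<ge> 1" using gt1 b_t_def by simp
    show "t \<ge> 2" by (rule assms(4))
    show "n_t = a_t * gseq \<alpha> \<beta> t + \<beta> * b_t * gseq \<alpha> \<beta> (t - 1)"
      unfolding n_t_def a_t_def b_t_def using rec by (simp add: algebra_simps)
    show "a_t \<le> (\<beta> - 1) * gseq \<alpha> \<beta> (t + 1) + \<alpha> * b_t" unfolding a_t_def b_t_def by simp
    show "b_t \<le> gseq \<alpha> \<beta> t" unfolding b_t_def by simp
    show "\<not> (\<exists>l::nat. \<exists>m::int. m > 0 \<and> a_t - \<alpha> * b_t - int l * gseq \<alpha> \<beta> (t + 1) = \<beta> * m)"
    proof
      assume "\<exists>l::nat. \<exists>m::int. m > 0 \<and> a_t - \<alpha> * b_t - int l * gseq \<alpha> \<beta> (t + 1) = \<beta> * m"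
      then obtain l m where lm: "m > 0" "a_t - \<alpha> * b_t - int l * gseq \<alpha> \<beta> (t + 1) = \<beta> * m" by blast
      have e: "(\<beta> - 1 - int l) * gseq \<alpha> \<beta> (t + 1) = \<beta> * m"
        using lm(2) unfolding a_t_def b_t_def by (simp add: algebra_simps)
      have "\<beta> dvd (\<beta> - 1 - int l) * gseq \<alpha> \<beta> (t + 1)" using e by simp
      then have "\<beta> dvd (\<beta> - 1 - int l)"
        using copb by (metis coprime_commute coprime_dvd_mult_left_iff)
      moreover have "int l + 1 = \<beta> - (\<beta> - 1 - int l)" by simp
      ultimately have d: "\<beta> dvd (int l + 1)"
        by (metis dvd_diff dvd_refl)
      have "\<beta> * m > 0" using lm(1) assms(2) by simp
      then have "(\<beta> - 1 - int l) * gseq \<alpha> \<beta> (t + 1) > 0" using e by simp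
      then have "(\<beta> - 1 - int l) > 0" using gt1' by (simp add: zero_less_mult_iff)
      then have "int l + 1 < \<beta>" by simp
      moreover have "\<beta> \<le> int l + 1" using d by (simp add: zdvd_imp_le)
      ultimately show False by simp
    qed
  qed
  have uniq: "a = a_t \<and> b = b_t \<and> s = t" if h: "abt_cond \<alpha> \<beta> n_t a b s" for a b s
  proof -
    have c: "a \<ge> 1" "b \<ge> 1" "s \<ge> 2" "n_t = a * gseq \<alpha> \<beta> s + \<beta> * b * gseq \<alpha> \<beta> (s - 1)"
      "b \<le> gseq \<alpha> \<beta> s"
      using h unfolding abt_cond_def by auto
    have st1: "\<not> s < t"
    proof
      assume "s < t"
      have ub: "n_t \<le> \<beta> * gseq \<alpha> \<beta> s * gseq \<alpha> \<beta> (s + 1)" by (rule upper_bound[OF assms(1,2) h])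
      have m1: "gseq \<alpha> \<beta> s \<le> gseq \<alpha> \<beta> (t - 1)" using g_mono[OF assms(1,2)] \<open>s < t\<close> c(3) by simp
      have m2: "gseq \<alpha> \<beta> (s + 1) \<le> gseq \<alpha> \<beta> t" using g_mono[OF assms(1,2)] \<open>s < t\<close> c(3) by simp
      have s0: "gseq \<alpha> \<beta> s \<ge> 1" "gseq \<alpha> \<beta> (s + 1) \<ge> 1" using g_ge1[OF assms(1,2)] c(3) by auto
      have lt: "gseq \<alpha> \<beta> (t - 1) < gseq \<alpha> \<beta> (t + 1)"
      proof -
        have "\<beta> * gseq \<alpha> \<beta> (t - 1) \<ge> gseq \<alpha> \<beta> (t - 1)" using assms(2) gtm mult_right_mono[of 1 \<beta> "gseq \<alpha> \<beta> (t - 1)"] by simp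
        moreover have "\<alpha> * gseq \<alpha> \<beta> t \<ge> 1" using assms(1) gt1 mult_mono[of 1 \<alpha> 1 "gseq \<alpha> \<beta> t"] by simp
        ultimately show ?thesis using rec by simp
      qed
      have "gseq \<alpha> \<beta> s * gseq \<alpha> \<beta> (s + 1) \<le> gseq \<alpha> \<beta> (t - 1) * gseq \<alpha> \<beta> t"
        using m1 m2 s0 by (meson mult_mono order.trans zero_le_one)
      also have "\<dots> < gseq \<alpha> \<beta> (t + 1) * gseq \<alpha> \<beta> t" using lt gt1 by simp
      finally have "\<beta> * (gseq \<alpha> \<beta> s * gseq \<alpha> \<beta> (s + 1)) < \<beta> * (gseq \<alpha> \<beta> t * gseq \<alpha> \<beta> (t + 1))"
        using assms(2) by (simp add: mult.commute)
      then show False using ub unfolding n_t_def by (simp add: mult.assoc)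
    qed
    have st2: "\<not> s > t"
    proof
      assume "s > t"
      then obtain j where j: "s = t + 1 + j" by (metis Suc_eq_plus1 less_iff_Suc_add add.assoc add.commute)
      have "n_t = a * gseq \<alpha> \<beta> (t + 1 + j) + \<beta> * b * gseq \<alpha> \<beta> (t + j)" using c(4) j by simp
      then show False using no_rep_above[OF assms(1,2,3), of t j] c(1,2) assms(4) unfolding n_t_def by auto
    qed
    have st: "s = t" using st1 st2 by simp
    have "gseq \<alpha> \<beta> t dvd \<beta> * b * gseq \<alpha> \<beta> (t - 1)"
    proof -
      have "\<beta> * b * gseq \<alpha> \<beta> (t - 1) = gseq \<alpha> \<beta> t * (\<beta> * gseq \<alpha> \<beta> (t + 1) - a)"
        using c(4) st unfolding n_t_def by (simp add: algebra_simps)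
      then show ?thesis by simp
    qed
    then have "gseq \<alpha> \<beta> t dvd b" using copb' copc
      by (metis coprime_dvd_mult_left_iff coprime_dvd_mult_right_iff)
    then obtain k where k: "b = gseq \<alpha> \<beta> t * k" by blast
    have "gseq \<alpha> \<beta> t * k > 0" using k c(2) by simp
    then have "k > 0" using gt1 by (simp add: zero_less_mult_iff)
    then have "k \<ge> 1" by simp
    moreover have "gseq \<alpha> \<beta> t * k \<le> gseq \<alpha> \<beta> t * 1" using k c(5) st by simp
    then have "k \<le> 1" using gt1 by (simp add: mult_le_cancel_left_pos)
    ultimately have bb: "b = b_t" using k b_t_def by simp
    have "gseq \<alpha> \<beta> t * a = gseq \<alpha> \<beta> t * a_t"
      using c(4) st bb rec unfolding n_t_def a_t_def b_t_def by (simp add: algebra_simps)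
    then have "a = a_t" using gt1 by simp
    then show ?thesis using bb st by simp
  qed
  have abt: "abt \<alpha> \<beta> n_t = (a_t, b_t, t)"
    unfolding abt_def
  proof (rule the_equality)
    show "case (a_t, b_t, t) of (a, b, t) \<Rightarrow> abt_cond \<alpha> \<beta> n_t a b t" using ex by simp
    fix x assume "case x of (a, b, t) \<Rightarrow> abt_cond \<alpha> \<beta> n_t a b t"
    then show "x = (a_t, b_t, t)" using uniq by (cases x) auto
  qed
  have w: "walk \<alpha> \<beta> b_t a_t (t + 1) = n_t"
  proof -
    have "walk \<alpha> \<beta> b_t a_t (Suc (Suc (Suc r))) = a_t * gseq \<alpha> \<beta> (Suc (Suc r)) + \<beta> * b_t * gseq \<alpha> \<beta> (Suc r)"
      by (rule walk_formula)
    also have "\<dots> = n_t" using rec r unfolding n_t_def a_t_def b_t_def by (simp add: algebra_simps)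
    finally show ?thesis using r by simp
  qed
  have "ereal (real (t + 1)) \<le> s_walk \<alpha> \<beta> n_t b_t a_t"
    unfolding s_walk_def
  proof (rule Sup_upper)
    show "ereal (real (t + 1)) \<in> (\<lambda>k. ereal (real k)) ` {k. k \<ge> 1 \<and> walk \<alpha> \<beta> b_t a_t k = n_t}"
      by (rule image_eqI[where x="t + 1"]) (use w in auto)
  qed
  also have "s_walk \<alpha> \<beta> n_t b_t a_t \<le> s_max \<alpha> \<beta> n_t"
    unfolding s_max_def
    by (rule Sup_upper) (use at1 gt1 b_t_def in auto)
  finally have "ereal (real (t + 1)) \<le> s_max \<alpha> \<beta> n_t" .
  moreover have "(2::ereal) < ereal (real (t + 1))" using assms(4) by simp
  ultimately have "s_max \<alpha> \<beta> n_t > 2" using less_le_trans by blast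
  then show ?thesis using abt unfolding a_of_def b_of_def t_of_def by simp
qed

end
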